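(* Let $I$ be a finite nonempty set and let $\phi=\bigwedge_{i\in I}\phi_i$, where each $\phi_i$ is a formula of the intuitionistic propositional calculus that is disjunctive in the variable $x$. Let $N$ be the number of distinct head subformulas and $M$ the number of distinct side subformulas occurring in any of the $\phi_i$. Then $\rho(\phi)\le (N+1)(M+1)$.
   Context: Formulas of the intuitionistic propositional calculus (IPC) are built from propositional variables, $\top,\bot,\wedge,\vee,\to$. For a formula $\phi$ containing the variable $x$, define $\phi^0=x$ and $\phi^{n+1}=\phi[\phi^n/x]$ (substitution of $\phi^n$ for $x$ in $\phi$). The Ruitenburg number $\rho(\phi)$ is the least $n\ge 0$ such that $\phi^{n+2}$ and $\phi^n$ are provably equivalent in IPC. A formula is disjunctive in $x$ if it is generated by the grammar $\phi ::= x \mid \alpha\to\phi \mid \beta\vee\phi \mid \phi\vee\phi$, where $\alpha,\beta$ range over IPC formulas not containing $x$ (disjunctions taken up to commutativity). In the parse of a disjunctive formula, each formula $\alpha$ used in a production $\alpha\to\phi'$ is a head subformula, and each formula $\beta$ used in a production $\beta\vee\phi'$ is a side subformula. *)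

theory Defs
  imports Main
begin

datatype form = Var nat | Top | Bot | And form form | Or form form | Imp form form

fun vars :: "form \<Rightarrow> nat set" where
  "vars (Var y) = {y}"
| "vars Top = {}"
| "vars Bot = {}"
| "vars (And p q) = vars p \<union> vars q"
| "vars (Or p q) = vars p \<union> vars q"
| "vars (Imp p q) = vars p \<union> vars q"

inductive nd :: "form set \<Rightarrow> form \<Rightarrow> bool" where
  Ass: "p \<in> G \<Longrightarrow> nd G p"
| TopI: "nd G Top"
| BotE: "nd G Bot \<Longrightarrow> nd G p"
| AndI: "nd G p \<Longrightarrow> nd G q \<Longrightarrow> nd G (And p q)"
| AndE1: "nd G (And p q) \<Longrightarrow> nd G p"
| AndE2: "nd G (And p q) \<Longrightarrow> nd G q"
| OrI1: "nd G p \<Longrightarrow> nd G (Or p q)"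
| OrI2: "nd G q \<Longrightarrow> nd G (Or p q)"
| OrE: "nd G (Or p q) \<Longrightarrow> nd (insert p G) r \<Longrightarrow> nd (insert q G) r \<Longrightarrow> nd G r"
| ImpI: "nd (insert p G) q \<Longrightarrow> nd G (Imp p q)"
| ImpE: "nd G (Imp p q) \<Longrightarrow> nd G p \<Longrightarrow> nd G q"

definition ipc_equiv :: "form \<Rightarrow> form \<Rightarrow> bool" where
  "ipc_equiv p q \<longleftrightarrow> nd {} (Imp p q) \<and> nd {} (Imp q p)"

fun subst :: "nat \<Rightarrow> form \<Rightarrow> form \<Rightarrow> form" where
  "subst x s (Var y) = (if y = x then s else Var y)"
| "subst x s Top = Top"
| "subst x s Bot = Bot"
| "subst x s (And p q) = And (subst x s p) (subst x s q)"
| "subst x s (Or p q) = Or (subst x s p) (subst x s q)"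
| "subst x s (Imp p q) = Imp (subst x s p) (subst x s q)"

fun iter :: "nat \<Rightarrow> form \<Rightarrow> nat \<Rightarrow> form" where
  "iter x phi 0 = Var x"
| "iter x phi (Suc n) = subst x (iter x phi n) phi"

definition ruitenburg :: "nat \<Rightarrow> form \<Rightarrow> nat" where
  "ruitenburg x phi = (LEAST n. ipc_equiv (iter x phi (n + 2)) (iter x phi n))"

inductive disjunctive :: "nat \<Rightarrow> form \<Rightarrow> bool" where
  dVar: "disjunctive x (Var x)"
| dImp: "x \<notin> vars a \<Longrightarrow> disjunctive x p \<Longrightarrow> disjunctive x (Imp a p)"
| dOrL: "x \<notin> vars b \<Longrightarrow> disjunctive x p \<Longrightarrow> disjunctive x (Or b p)"
| dOrR: "x \<notin> vars b \<Longrightarrow> disjunctive x p \<Longrightarrow> disjunctive x (Or p b)"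
| dOr: "disjunctive x p \<Longrightarrow> disjunctive x q \<Longrightarrow> disjunctive x (Or p q)"

text \<open>Head and side subformulas of the (unique up to commutativity) parse of a
  disjunctive formula. The disjunct free of x is the side formula; the other is parsed further.\<close>
fun heads :: "nat \<Rightarrow> form \<Rightarrow> form set" where
  "heads x (Imp a p) = insert a (heads x p)"
| "heads x (Or p q) = (if x \<in> vars p then heads x p else {}) \<union> (if x \<in> vars q then heads x q else {})"
| "heads x _ = {}"

fun sides :: "nat \<Rightarrow> form \<Rightarrow> form set" where
  "sides x (Imp a p) = sides x p"
| "sides x (Or p q) = (if x \<in> vars p then sides x p else {p}) \<union> (if x \<in> vars q then sides x q else {q})"
| "sides x _ = {}"

fun conj_list :: "form list \<Rightarrow> form" where
  "conj_list [] = Top"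
| "conj_list [p] = p"
| "conj_list (p # ps) = And p (conj_list ps)"

end

theory Submission
  imports Defs
begin

lemma weaken: "nd G p \<Longrightarrow> G \<subseteq> G' \<Longrightarrow> nd G' p"
proof (induction arbitrary: G' rule: nd.induct)
  case (OrE G p q r)
  then show ?case by (meson insert_mono nd.OrE)
next
  case (ImpI p G q)
  then show ?case by (meson insert_mono nd.ImpI)
qed (auto intro: nd.intros)

lemma wk: "nd G p \<Longrightarrow> nd (insert a G) p"
  using weaken by blast

lemma imp_ins: "nd G (Imp a q) \<Longrightarrow> nd (insert a G) q"
  by (rule nd.ImpE[OF wk]) (auto intro: nd.Ass)

lemma or_map: "nd G (Or A B) \<Longrightarrow> nd (insert A G) A' \<Longrightarrow> nd (insert B G) B' \<Longrightarrow> nd G (Or A' B')"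
  by (erule nd.OrE) (erule nd.OrI1, erule nd.OrI2)

lemma ass: "nd (insert A G) A"
  by (rule nd.Ass) simp

lemma vars_disj: "disjunctive x p \<Longrightarrow> x \<in> vars p"
  by (induction rule: disjunctive.induct) auto

lemma subst_novar: "x \<notin> vars p \<Longrightarrow> subst x Y p = p"
  by (induction p) auto

lemma mono_d: "disjunctive x p \<Longrightarrow> nd G (Imp Y Z) \<Longrightarrow> nd G (subst x Y p) \<Longrightarrow> nd G (subst x Z p)"
proof (induction arbitrary: G rule: disjunctive.induct)
  case (dVar x)
  then show ?case by (auto intro: nd.ImpE)
next
  case (dImp x a p)
  have "nd (insert a G) (subst x Y p)"
    using dImp by (simp add: subst_novar imp_ins)
  moreover have "nd (insert a G) (Imp Y Z)" using dImp(4) by (rule wk)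
  ultimately have "nd (insert a G) (subst x Z p)" using dImp.IH by blast
  then show ?case using dImp by (simp add: subst_novar nd.ImpI)
next
  case (dOrL x b p)
  have h: "nd G (Or b (subst x Y p))" using dOrL by (simp add: subst_novar)
  have "nd (insert (subst x Y p) G) (subst x Z p)"
    using dOrL.IH[OF wk[OF dOrL(4)] nd.Ass] by simp
  then have "nd G (Or b (subst x Z p))"
    using or_map[OF h ass] by blast
  then show ?case using dOrL by (simp add: subst_novar)
next
  case (dOrR x b p)
  have h: "nd G (Or (subst x Y p) b)" using dOrR by (simp add: subst_novar)
  have "nd (insert (subst x Y p) G) (subst x Z p)"
    using dOrR.IH[OF wk[OF dOrR(4)] nd.Ass] by simp
  then have "nd G (Or (subst x Z p) b)"
    using or_map[OF h _ ass] by blast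
  then show ?case using dOrR by (simp add: subst_novar)
next
  case (dOr x p q)
  have h: "nd G (Or (subst x Y p) (subst x Y q))" using dOr by simp
  have "nd (insert (subst x Y p) G) (subst x Z p)"
    using dOr.IH(1)[OF wk[OF dOr(5)] nd.Ass] by simp
  moreover have "nd (insert (subst x Y q) G) (subst x Z q)"
    using dOr.IH(2)[OF wk[OF dOr(5)] nd.Ass] by simp
  ultimately have "nd G (Or (subst x Z p) (subst x Z q))"
    using or_map[OF h] by blast
  then show ?case by simp
qed

lemma infl: "disjunctive x p \<Longrightarrow> nd G Y \<Longrightarrow> nd G (subst x Y p)"
proof (induction arbitrary: G rule: disjunctive.induct)
  case (dImp x a p)
  then show ?case by (simp add: subst_novar nd.ImpI wk)
qed (auto simp: subst_novar intro: nd.intros)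

lemma or_mono: "nd G (Or Y A) \<Longrightarrow> nd (insert A G) B \<Longrightarrow> nd G (Or Y B)"
  using or_map[OF _ ass] by blast

lemma condwk: "\<forall>a\<in>S. nd G a \<or> nd (insert a G) W \<Longrightarrow>
   \<forall>a\<in>S. nd (insert c G) a \<or> nd (insert a (insert c G)) W"
proof
  fix a assume h: "\<forall>a\<in>S. nd G a \<or> nd (insert a G) W" and "a \<in> S"
  then have "nd G a \<or> nd (insert a G) W" by blast
  then show "nd (insert c G) a \<or> nd (insert a (insert c G)) W"
  proof
    assume "nd G a" then show ?thesis using wk by blast
  next
    assume "nd (insert a G) W"
    then have "nd (insert c (insert a G)) W" by (rule wk)
    then show ?thesis by (simp add: insert_commute)
  qed
qed

lemma keyL: "disjunctive x p \<Longrightarrow> (\<forall>a\<in>heads x p. nd G a \<or> nd (insert a G) (Imp Y Z))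
   \<Longrightarrow> nd G (subst x Y p) \<Longrightarrow> nd G (Or Y (subst x Z p))"
proof (induction arbitrary: G rule: disjunctive.induct)
  case (dVar x)
  then show ?case by (auto intro: nd.OrI1)
next
  case (dImp x a p)
  have hyp: "nd G (Imp a (subst x Y p))" using dImp by (simp add: subst_novar)
  have C: "\<forall>a\<in>heads x p. nd G a \<or> nd (insert a G) (Imp Y Z)" using dImp by simp
  have "nd G a \<or> nd (insert a G) (Imp Y Z)" using dImp by simp
  then have "nd G (Or Y (Imp a (subst x Z p)))"
  proof
    assume a: "nd G a"
    have "nd G (subst x Y p)" using nd.ImpE[OF hyp a] .
    then have h2: "nd G (Or Y (subst x Z p))" using dImp.IH[OF C] by blast
    have "nd (insert (subst x Z p) G) (Imp a (subst x Z p))"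
      by (intro nd.ImpI wk ass)
    then show ?thesis using or_mono[OF h2] by blast
  next
    assume i: "nd (insert a G) (Imp Y Z)"
    have "nd (insert a G) (subst x Y p)" using hyp by (rule imp_ins)
    then have "nd (insert a G) (subst x Z p)" using mono_d[OF dImp.hyps(2) i] by blast
    then show ?thesis by (intro nd.OrI2 nd.ImpI)
  qed
  then show ?case using dImp by (simp add: subst_novar)
next
  case (dOrL x b p)
  have hyp: "nd G (Or b (subst x Y p))" using dOrL by (simp add: subst_novar)
  have C: "\<forall>a\<in>heads x p. nd G a \<or> nd (insert a G) (Imp Y Z)"
    using dOrL vars_disj by simp
  have "nd (insert (subst x Y p) G) (Or Y (subst x Z p))"
    using dOrL.IH[OF condwk[OF C] ass] .
  then have 1: "nd (insert (subst x Y p) G) (Or Y (Or b (subst x Z p)))"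
    by (rule or_mono) (intro nd.OrI2 ass)
  have 2: "nd (insert b G) (Or Y (Or b (subst x Z p)))"
    by (intro nd.OrI2 nd.OrI1 ass)
  have "nd G (Or Y (Or b (subst x Z p)))" using nd.OrE[OF hyp 2 1] .
  then show ?case using dOrL by (simp add: subst_novar)
next
  case (dOrR x b p)
  have hyp: "nd G (Or (subst x Y p) b)" using dOrR by (simp add: subst_novar)
  have C: "\<forall>a\<in>heads x p. nd G a \<or> nd (insert a G) (Imp Y Z)"
    using dOrR vars_disj by simp
  have "nd (insert (subst x Y p) G) (Or Y (subst x Z p))"
    using dOrR.IH[OF condwk[OF C] ass] .
  then have 1: "nd (insert (subst x Y p) G) (Or Y (Or (subst x Z p) b))"
    by (rule or_mono) (intro nd.OrI1 ass)
  have 2: "nd (insert b G) (Or Y (Or (subst x Z p) b))"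
    by (intro nd.OrI2 ass)
  have "nd G (Or Y (Or (subst x Z p) b))" using nd.OrE[OF hyp 1 2] .
  then show ?case using dOrR by (simp add: subst_novar)
next
  case (dOr x p q)
  have hyp: "nd G (Or (subst x Y p) (subst x Y q))" using dOr by simp
  have Cp: "\<forall>a\<in>heads x p. nd G a \<or> nd (insert a G) (Imp Y Z)"
    using dOr vars_disj by simp
  have Cq: "\<forall>a\<in>heads x q. nd G a \<or> nd (insert a G) (Imp Y Z)"
    using dOr vars_disj by simp
  have "nd (insert (subst x Y p) G) (Or Y (subst x Z p))"
    using dOr.IH(1)[OF condwk[OF Cp] ass] .
  then have 1: "nd (insert (subst x Y p) G) (Or Y (Or (subst x Z p) (subst x Z q)))"
    by (rule or_mono) (intro nd.OrI1 ass)
  have "nd (insert (subst x Y q) G) (Or Y (subst x Z q))"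
    using dOr.IH(2)[OF condwk[OF Cq] ass] .
  then have 2: "nd (insert (subst x Y q) G) (Or Y (Or (subst x Z p) (subst x Z q)))"
    by (rule or_mono) (intro nd.OrI2 ass)
  have "nd G (Or Y (Or (subst x Z p) (subst x Z q)))" using nd.OrE[OF hyp 1 2] .
  then show ?case by simp
qed

lemma conj_elim: "nd G (conj_list qs) \<Longrightarrow> q \<in> set qs \<Longrightarrow> nd G q"
  by (induction qs arbitrary: q rule: conj_list.induct) (auto intro: nd.AndE1 nd.AndE2)

lemma conj_intro: "(\<forall>q\<in>set qs. nd G q) \<Longrightarrow> nd G (conj_list qs)"
  by (induction qs rule: conj_list.induct) (auto intro: nd.AndI nd.TopI)

lemma subst_conj: "subst x Y (conj_list qs) = conj_list (map (subst x Y) qs)"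
  by (induction qs rule: conj_list.induct) auto

lemma finite_heads: "finite (heads x p)"
  by (induction x p rule: heads.induct) auto

lemma stepQ:
  assumes disj: "\<forall>p\<in>set ps. disjunctive x p"
    and C: "\<forall>a\<in>(\<Union>p\<in>set ps. heads x p). nd G a \<or>
       nd (insert a G) (Imp (iter x (conj_list ps) (Suc n)) (iter x (conj_list ps) n))"
  shows "nd G (Imp (iter x (conj_list ps) (Suc (Suc n))) (iter x (conj_list ps) (Suc n)))"
proof -
  define Y where "Y = iter x (conj_list ps) (Suc n)"
  define Z where "Z = iter x (conj_list ps) n"
  define G' where "G' = insert (iter x (conj_list ps) (Suc (Suc n))) G"
  have YY: "iter x (conj_list ps) (Suc (Suc n)) = conj_list (map (subst x Y) ps)"
    by (simp add: Y_def subst_conj)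
  have YZ: "Y = conj_list (map (subst x Z) ps)"
    by (simp add: Y_def Z_def subst_conj)
  have "\<forall>p\<in>set ps. nd G' (subst x Z p)"
  proof
    fix p assume p: "p \<in> set ps"
    have "nd G' (conj_list (map (subst x Y) ps))" unfolding G'_def YY by (rule ass)
    then have h: "nd G' (subst x Y p)" using conj_elim p by auto
    have Cp: "\<forall>a\<in>heads x p. nd G' a \<or> nd (insert a G') (Imp Y Z)"
      unfolding G'_def using condwk[of "heads x p" G "Imp Y Z"] C p Y_def Z_def by blast
    have o: "nd G' (Or Y (subst x Z p))" using keyL[OF _ Cp h] disj p by blast
    have "nd (insert Y G') (subst x Z p)"
      using conj_elim[OF ass[of "conj_list (map (subst x Z) ps)" G']] p YZ by auto
    then show "nd G' (subst x Z p)" using nd.OrE[OF o] ass by blast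
  qed
  then have "nd G' (conj_list (map (subst x Z) ps))" using conj_intro by auto
  then have "nd G' Y" using YZ by simp
  then show ?thesis unfolding G'_def Y_def by (rule nd.ImpI)
qed

lemma mainQ:
  assumes disj: "\<forall>p\<in>set ps. disjunctive x p"
  shows "\<forall>G n. card {a \<in> (\<Union>p\<in>set ps. heads x p). \<not> nd G a} \<le> k \<longrightarrow> k \<le> n \<longrightarrow>
    nd G (Imp (iter x (conj_list ps) (Suc (Suc n))) (iter x (conj_list ps) (Suc n)))"
proof (induction k)
  case 0
  show ?case
  proof (intro allI impI)
    fix G n
    assume "card {a \<in> (\<Union>p\<in>set ps. heads x p). \<not> nd G a} \<le> 0"
    then have "{a \<in> (\<Union>p\<in>set ps. heads x p). \<not> nd G a} = {}"
      using finite_heads by simp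
    then show "nd G (Imp (iter x (conj_list ps) (Suc (Suc n))) (iter x (conj_list ps) (Suc n)))"
      by (intro stepQ[OF disj]) blast
  qed
next
  case (Suc k)
  show ?case
  proof (intro allI impI)
    fix G n
    assume c: "card {a \<in> (\<Union>p\<in>set ps. heads x p). \<not> nd G a} \<le> Suc k" and kn: "Suc k \<le> n"
    then obtain m where m: "n = Suc m" and km: "k \<le> m" by (cases n) auto
    let ?H = "\<Union>p\<in>set ps. heads x p"
    have fin: "finite ?H" using finite_heads by simp
    have "\<forall>a\<in>?H. nd G a \<or>
       nd (insert a G) (Imp (iter x (conj_list ps) (Suc (Suc m))) (iter x (conj_list ps) (Suc m)))"
    proof
      fix a assume aH: "a \<in> ?H"
      show "nd G a \<or> nd (insert a G) (Imp (iter x (conj_list ps) (Suc (Suc m))) (iter x (conj_list ps) (Suc m)))"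
      proof (cases "nd G a")
        case False
        have sub: "{b \<in> ?H. \<not> nd (insert a G) b} \<subseteq> {b \<in> ?H. \<not> nd G b} - {a}"
          using wk ass by blast
        have "card {b \<in> ?H. \<not> nd (insert a G) b} \<le> card ({b \<in> ?H. \<not> nd G b} - {a})"
          by (rule card_mono) (use fin sub in auto)
        also have "\<dots> = card {b \<in> ?H. \<not> nd G b} - 1"
          using False aH fin by (simp add: card_Diff_singleton)
        finally have "card {b \<in> ?H. \<not> nd (insert a G) b} \<le> k" using c by linarith
        then have "nd (insert a G) (Imp (iter x (conj_list ps) (Suc (Suc m))) (iter x (conj_list ps) (Suc m)))"
          using Suc.IH km by blast
        then show ?thesis by simp
      qed simp
    qed
    then show "nd G (Imp (iter x (conj_list ps) (Suc (Suc n))) (iter x (conj_list ps) (Suc n)))"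
      unfolding m by (rule stepQ[OF disj])
  qed
qed

lemma imp_trans: "nd G (Imp A B) \<Longrightarrow> nd G (Imp B C) \<Longrightarrow> nd G (Imp A C)"
  by (rule nd.ImpI, rule nd.ImpE[OF wk imp_ins])

lemma infl_conj:
  assumes disj: "\<forall>p\<in>set ps. disjunctive x p"
  shows "nd G (Imp (iter x (conj_list ps) n) (iter x (conj_list ps) (Suc n)))"
proof -
  have "nd (insert (iter x (conj_list ps) n) G) (conj_list (map (subst x (iter x (conj_list ps) n)) ps))"
    using infl[OF _ ass] disj by (intro conj_intro) auto
  then show ?thesis by (simp add: subst_conj nd.ImpI)
qed

theorem mainTheorem1:
  fixes x :: nat and ps :: "form list"
  assumes "ps \<noteq> []"
    and "\<forall>p \<in> set ps. disjunctive x p"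
  shows "ruitenburg x (conj_list ps)
         \<le> (card (\<Union>p \<in> set ps. heads x p) + 1) * (card (\<Union>p \<in> set ps. sides x p) + 1)"
proof -
  let ?H = "\<Union>p\<in>set ps. heads x p"
  let ?N = "card ?H"
  let ?I = "iter x (conj_list ps)"
  have fin: "finite ?H" using finite_heads by simp
  have c: "\<And>G. card {a \<in> ?H. \<not> nd G a} \<le> ?N"
    using fin by (intro card_mono) auto
  have q1: "nd {} (Imp (?I (Suc (Suc ?N))) (?I (Suc ?N)))"
    using mainQ[OF assms(2), of ?N] c by blast
  have q2: "nd {} (Imp (?I (Suc (Suc (Suc ?N)))) (?I (Suc (Suc ?N))))"
    using mainQ[OF assms(2), of ?N] c by (meson le_SucI order_refl)
  have i1: "nd {} (Imp (?I (Suc ?N)) (?I (Suc (Suc ?N))))" using infl_conj[OF assms(2)] .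
  have i2: "nd {} (Imp (?I (Suc (Suc ?N))) (?I (Suc (Suc (Suc ?N)))))" using infl_conj[OF assms(2)] .
  have "ipc_equiv (?I (Suc ?N + 2)) (?I (Suc ?N))"
    unfolding ipc_equiv_def using imp_trans[OF q2 q1] imp_trans[OF i1 i2]
    by (simp add: numeral_2_eq_2)
  then have "ruitenburg x (conj_list ps) \<le> Suc ?N"
    unfolding ruitenburg_def by (rule Least_le)
  also have "\<dots> \<le> (?N + 1) * (card (\<Union>p \<in> set ps. sides x p) + 1)" by simp
  finally show ?thesis .
qed

end
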